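(* Each of the operators $\mathcal{S}$, $\widetilde{\mathcal{S}}$, $\mathcal{S}_{+\Delta}$, $\mathcal{S}_{-\Delta}$, $\widetilde{\mathcal{S}}_\Delta$, $\mathcal{T}^{(r,\pm)}_{rim}$, $\mathcal{S}^{(r,\pm)}_\Delta$, $\mathcal{T}^{(r,s)}_{rim}$, $\widetilde{\mathcal{T}}^{(r)}_{rim}$, $\widetilde{\mathcal{S}}^{(r)}_\Delta$ ($r,s\in\mathbb{N}$) defined below, mapping $\mathbb{D}$ into $\mathbb{D}$, is (a) Lipschitz with respect to $\|\cdot\|$, hence continuous in the $\|\cdot\|$ norm; and (b) $\Lambda$-compatible; consequently each of them is jointly $J_1$-continuous at every $x\in\mathbb{D}$.
   Context: $\mathbb{D}=\mathbb{D}([0,1],\mathbb{R})$ is the space of càdlàg functions on $[0,1]$ with the Skorokhod $J_1$-topology, $\|x\|=\sup_{0\le\tau\le1}|x(\tau)|$. $\Lambda$ is the set of continuous strictly increasing $\lambda:[0,1]\to[0,1]$ with $\lambda(0)=0,\lambda(1)=1$, and $I$ is the identity. $x_n\to x$ in $J_1$ means there are $\lambda_n\in\Lambda$ with $\|\lambda_n-I\|\vee\|x_n\circ\lambda_n-x\|\to0$. $\Psi:\mathbb{D}\to\mathbb{D}$ is $\Lambda$-compatible if $\Psi(x)\circ\lambda=\Psi(x\circ\lambda)$ for all $x\in\mathbb{D},\lambda\in\Lambda$; it is jointly $J_1$-continuous at $x$ if for every $x_n\to x$ in $J_1$ there exist $\lambda_n\in\Lambda$ with simultaneously $\|\lambda_n-I\|\to0$,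 $\|x_n\circ\lambda_n-x\|\to0$, $\|\Psi(x_n)\circ\lambda_n-\Psi(x)\|\to0$. For $x\in\mathbb{D}$ let $\Delta x(\tau)=x(\tau)-x(\tau-)$ for $\tau>0$ and $\Delta x(0)=0$. Define, for $\tau\in[0,1]$: (i) $\mathcal{S}(x)(\tau)=\sup_{0\le s\le\tau}x(s)$; (ii) $\widetilde{\mathcal{S}}(x)(\tau)=\sup_{0\le s\le\tau}|x(s)|$; (iii) $\mathcal{S}_{\pm\Delta}(x)(\tau)=\mathcal{S}_\Delta(\pm x)(\tau):=\sup_{0\le s\le\tau}\Delta(\pm x)(s)$; (iv) $\widetilde{\mathcal{S}}_\Delta(x)(\tau)=\sup_{0\le s\le\tau}|\Delta x(s)|$. (v) $\mathcal{T}^{(1,\pm)}_{rim}(x)=x\mp\mathcal{S}_{\pm\Delta}(x)$ and for $r\ge2$, $\mathcal{T}^{(r,\pm)}_{rim}(x)=\mathcal{T}^{(1,\pm)}_{rim}\circ\mathcal{T}^{(r-1,\pm)}_{rim}(x)$. (vi) $\mathcal{S}^{(1,\pm)}_\Delta(x)=\mathcal{S}_{\pm\Delta}(x)$ and for $r\ge2$, $\mathcal{S}^{(r,\pm)}_\Delta(x)=\mathcal{S}^{(1,\pm)}_\Delta\circ\mathcal{T}^{(r-1,\pm)}_{rim}(x)$. (vii) $\mathcal{T}^{(r,s)}_{rim}(x)=\mathcal{T}^{(r,+)}_{rim}\circ\mathcal{T}^{(s,-)}_{rim}(x)=\mathcal{T}^{(s,-)}_{rim}\circ\mathcal{T}^{(r,+)}_{rim}(x)$.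 (viii) $\widetilde{\mathcal{T}}^{(1)}_{rim}(x)=x-\widetilde{\mathcal{S}}_\Delta(x)$ and for $r\ge2$, $\widetilde{\mathcal{T}}^{(r)}_{rim}(x)=\widetilde{\mathcal{T}}^{(1)}_{rim}\circ\widetilde{\mathcal{T}}^{(r-1)}_{rim}(x)$. (ix) $\widetilde{\mathcal{S}}^{(1)}_\Delta(x)=\widetilde{\mathcal{S}}_\Delta(x)$ and for $r\ge2$, $\widetilde{\mathcal{S}}^{(r)}_\Delta(x)=\widetilde{\mathcal{S}}_\Delta\circ\widetilde{\mathcal{T}}^{(r-1)}_{rim}(x)$. *)

theory Defs
  imports "HOL-Analysis.Analysis"
begin

text \<open>Elements of the Skorokhod space D([0,1],R) are represented as functions
  real => real; only their values on [0,1] matter.\<close>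

definition cadlag :: "(real \<Rightarrow> real) \<Rightarrow> bool" where
  "cadlag x \<longleftrightarrow>
     (\<forall>t\<in>{0..<1}. (x \<longlongrightarrow> x t) (at_right t)) \<and>
     (\<forall>t\<in>{0<..1}. \<exists>l. (x \<longlongrightarrow> l) (at_left t))"

definition Dsp :: "(real \<Rightarrow> real) set" where
  "Dsp = {x. cadlag x}"

definition supn :: "(real \<Rightarrow> real) \<Rightarrow> real" where
  "supn x = (SUP t\<in>{0..1}. \<bar>x t\<bar>)"

definition Lambda_set :: "(real \<Rightarrow> real) set" where
  "Lambda_set = {l. continuous_on {0..1} l \<and> strict_mono_on {0..1} l \<and> l 0 = 0 \<and> l 1 = 1}"

definition J1_conv :: "(nat \<Rightarrow> real \<Rightarrow> real) \<Rightarrow> (real \<Rightarrow> real) \<Rightarrow> bool" where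
  "J1_conv xn x \<longleftrightarrow> (\<exists>ln. (\<forall>n. ln n \<in> Lambda_set) \<and>
      (\<lambda>n. supn (\<lambda>t. ln n t - t)) \<longlonglongrightarrow> 0 \<and>
      (\<lambda>n. supn (\<lambda>t. xn n (ln n t) - x t)) \<longlonglongrightarrow> 0)"

definition Lambda_compatible :: "((real \<Rightarrow> real) \<Rightarrow> (real \<Rightarrow> real)) \<Rightarrow> bool" where
  "Lambda_compatible \<Psi> \<longleftrightarrow>
     (\<forall>x\<in>Dsp. \<forall>l\<in>Lambda_set. \<forall>t\<in>{0..1}. \<Psi> x (l t) = \<Psi> (x \<circ> l) t)"

definition norm_Lipschitz :: "((real \<Rightarrow> real) \<Rightarrow> (real \<Rightarrow> real)) \<Rightarrow> bool" where
  "norm_Lipschitz \<Psi> \<longleftrightarrow> (\<exists>L. \<forall>x\<in>Dsp. \<forall>y\<in>Dsp.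
      supn (\<lambda>t. \<Psi> x t - \<Psi> y t) \<le> L * supn (\<lambda>t. x t - y t))"

definition jointly_J1_continuous_at ::
    "((real \<Rightarrow> real) \<Rightarrow> (real \<Rightarrow> real)) \<Rightarrow> (real \<Rightarrow> real) \<Rightarrow> bool" where
  "jointly_J1_continuous_at \<Psi> x \<longleftrightarrow>
     (\<forall>xn. (\<forall>n. xn n \<in> Dsp) \<and> J1_conv xn x \<longrightarrow>
        (\<exists>ln. (\<forall>n. ln n \<in> Lambda_set) \<and>
           (\<lambda>n. supn (\<lambda>t. ln n t - t)) \<longlonglongrightarrow> 0 \<and>
           (\<lambda>n. supn (\<lambda>t. xn n (ln n t) - x t)) \<longlonglongrightarrow> 0 \<and>
           (\<lambda>n. supn (\<lambda>t. \<Psi> (xn n) (ln n t) - \<Psi> x t)) \<longlonglongrightarrow> 0))"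

definition jump :: "(real \<Rightarrow> real) \<Rightarrow> real \<Rightarrow> real" where
  "jump x t = (if t \<le> 0 then 0 else x t - Lim (at_left t) x)"

definition Ssup :: "(real \<Rightarrow> real) \<Rightarrow> real \<Rightarrow> real" where
  "Ssup x t = (SUP s\<in>{0..t}. x s)"

definition Sabs :: "(real \<Rightarrow> real) \<Rightarrow> real \<Rightarrow> real" where
  "Sabs x t = (SUP s\<in>{0..t}. \<bar>x s\<bar>)"

text \<open>S_Delta(x)(t) = sup of jumps; S_{+Delta} = S_Delta, S_{-Delta}(x) = S_Delta(-x).\<close>
definition Sdelta :: "(real \<Rightarrow> real) \<Rightarrow> real \<Rightarrow> real" where
  "Sdelta x t = (SUP s\<in>{0..t}. jump x s)"

definition Sdelta_pm :: "bool \<Rightarrow> (real \<Rightarrow> real) \<Rightarrow> real \<Rightarrow> real" where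
  "Sdelta_pm pos x = (if pos then Sdelta x else Sdelta (\<lambda>t. - x t))"

definition Sdelta_abs :: "(real \<Rightarrow> real) \<Rightarrow> real \<Rightarrow> real" where
  "Sdelta_abs x t = (SUP s\<in>{0..t}. \<bar>jump x s\<bar>)"

text \<open>T^{(1,+-)}_rim(x) = x -+ S_{+-Delta}(x); pos = True is '+', False is '-'.\<close>
definition Trim1 :: "bool \<Rightarrow> (real \<Rightarrow> real) \<Rightarrow> real \<Rightarrow> real" where
  "Trim1 pos x t = (if pos then x t - Sdelta_pm True x t else x t + Sdelta_pm False x t)"

definition Trim :: "nat \<Rightarrow> bool \<Rightarrow> (real \<Rightarrow> real) \<Rightarrow> real \<Rightarrow> real" where
  "Trim r pos = (Trim1 pos ^^ r)"

definition Sdelta_r :: "nat \<Rightarrow> bool \<Rightarrow> (real \<Rightarrow> real) \<Rightarrow> real \<Rightarrow> real" where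
  "Sdelta_r r pos x = Sdelta_pm pos (Trim (r - 1) pos x)"

definition Trim_rs :: "nat \<Rightarrow> nat \<Rightarrow> (real \<Rightarrow> real) \<Rightarrow> real \<Rightarrow> real" where
  "Trim_rs r s x = Trim r True (Trim s False x)"

definition Trim_tilde1 :: "(real \<Rightarrow> real) \<Rightarrow> real \<Rightarrow> real" where
  "Trim_tilde1 x t = x t - Sdelta_abs x t"

definition Trim_tilde :: "nat \<Rightarrow> (real \<Rightarrow> real) \<Rightarrow> real \<Rightarrow> real" where
  "Trim_tilde r = (Trim_tilde1 ^^ r)"

definition Sdelta_tilde_r :: "nat \<Rightarrow> (real \<Rightarrow> real) \<Rightarrow> real \<Rightarrow> real" where
  "Sdelta_tilde_r r x = Sdelta_abs (Trim_tilde (r - 1) x)"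

definition operators :: "nat \<Rightarrow> nat \<Rightarrow> ((real \<Rightarrow> real) \<Rightarrow> (real \<Rightarrow> real)) set" where
  "operators r s = {Ssup, Sabs, Sdelta_pm True, Sdelta_pm False, Sdelta_abs,
     Trim r True, Trim r False, Sdelta_r r True, Sdelta_r r False,
     Trim_rs r s, Trim_tilde r, Sdelta_tilde_r r}"

end

theory Submission imports Defs begin

lemma Dsp_cadlag: "x \<in> Dsp \<Longrightarrow> cadlag x" by (simp add: Dsp_def)

lemma Dsp_right: "x \<in> Dsp \<Longrightarrow> 0 \<le> t \<Longrightarrow> t < 1 \<Longrightarrow> (x \<longlongrightarrow> x t) (at_right t)"
  by (auto simp: Dsp_def cadlag_def)

lemma Dsp_left_ex: "x \<in> Dsp \<Longrightarrow> 0 < t \<Longrightarrow> t \<le> 1 \<Longrightarrow> \<exists>l. (x \<longlongrightarrow> l) (at_left t)"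
  by (auto simp: Dsp_def cadlag_def)

lemma Dsp_left: "x \<in> Dsp \<Longrightarrow> 0 < t \<Longrightarrow> t \<le> 1 \<Longrightarrow> (x \<longlongrightarrow> Lim (at_left t) x) (at_left t)"
  using Dsp_left_ex tendsto_Lim trivial_limit_at_left_real by blast

lemma DspI:
  assumes "\<And>t. 0 \<le> t \<Longrightarrow> t < 1 \<Longrightarrow> (x \<longlongrightarrow> x t) (at_right t)"
    and "\<And>t. 0 < t \<Longrightarrow> t \<le> 1 \<Longrightarrow> \<exists>l. (x \<longlongrightarrow> l) (at_left t)"
  shows "x \<in> Dsp"
  using assms by (auto simp: Dsp_def cadlag_def)

lemma Dsp_diff: "x \<in> Dsp \<Longrightarrow> y \<in> Dsp \<Longrightarrow> (\<lambda>t. x t - y t) \<in> Dsp"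
  apply (rule DspI)
   apply (blast intro: tendsto_diff Dsp_right)
  by (metis Dsp_left_ex tendsto_diff)

lemma Dsp_add: "x \<in> Dsp \<Longrightarrow> y \<in> Dsp \<Longrightarrow> (\<lambda>t. x t + y t) \<in> Dsp"
  apply (rule DspI)
   apply (blast intro: tendsto_add Dsp_right)
  by (metis Dsp_left_ex tendsto_add)

lemma Dsp_neg: "x \<in> Dsp \<Longrightarrow> (\<lambda>t. - x t) \<in> Dsp"
  apply (rule DspI)
   apply (blast intro: tendsto_minus Dsp_right)
  by (metis Dsp_left_ex tendsto_minus)

lemma Dsp_abs: "x \<in> Dsp \<Longrightarrow> (\<lambda>t. \<bar>x t\<bar>) \<in> Dsp"
  apply (rule DspI)
   apply (blast intro: tendsto_rabs Dsp_right)
  by (metis Dsp_left_ex tendsto_rabs)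

lemma Dsp_const: "(\<lambda>t. c) \<in> Dsp"
  by (rule DspI) auto

lemma Dsp_bounded:
  assumes x: "x \<in> Dsp"
  shows "\<exists>B. \<forall>t\<in>{0..1}. \<bar>x t\<bar> \<le> B"
proof -
  have "\<forall>t\<in>{0..1}. \<exists>d B. d > 0 \<and> B \<ge> 0 \<and> (\<forall>u\<in>{0..1}. \<bar>u - t\<bar> < d \<longrightarrow> \<bar>x u\<bar> \<le> B)"
  proof
    fix t :: real assume t: "t \<in> {0..1}"
    obtain d1 B1 where d1: "d1 > 0" "B1 \<ge> 0" "\<forall>u. t < u \<and> u < t + d1 \<and> u \<le> 1 \<longrightarrow> \<bar>x u\<bar> \<le> B1"
    proof (cases "t < 1")
      case True
      then have "(x \<longlongrightarrow> x t) (at_right t)" using Dsp_right[OF x] t by auto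
      then have "eventually (\<lambda>u. dist (x u) (x t) < 1) (at_right t)"
        by (simp add: tendsto_iff)
      then obtain b where b: "b > t" "\<forall>u>t. u < b \<longrightarrow> dist (x u) (x t) < 1"
        by (auto simp: eventually_at_right_field)
      show ?thesis
        apply (rule that[of "b - t" "\<bar>x t\<bar> + 1"])
        using b by (auto simp: dist_real_def)
    next
      case False
      show ?thesis
        apply (rule that[of 1 0])
        using False t by auto
    qed
    obtain d2 B2 where d2: "d2 > 0" "B2 \<ge> 0" "\<forall>u. t - d2 < u \<and> u < t \<and> 0 \<le> u \<longrightarrow> \<bar>x u\<bar> \<le> B2"
    proof (cases "t > 0")
      case True
      then obtain l where "(x \<longlongrightarrow> l) (at_left t)" using Dsp_left_ex[OF x] t by auto
      then have "eventually (\<lambda>u. dist (x u) l < 1) (at_left t)"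
        by (simp add: tendsto_iff)
      then obtain b where b: "b < t" "\<forall>u>b. u < t \<longrightarrow> dist (x u) l < 1"
        by (auto simp: eventually_at_left_field)
      show ?thesis
        apply (rule that[of "t - b" "\<bar>l\<bar> + 1"])
        using b by (auto simp: dist_real_def)
    next
      case False
      show ?thesis
        apply (rule that[of 1 0])
        using False t by auto
    qed
    show "\<exists>d B. d > 0 \<and> B \<ge> 0 \<and> (\<forall>u\<in>{0..1}. \<bar>u - t\<bar> < d \<longrightarrow> \<bar>x u\<bar> \<le> B)"
    proof (intro exI conjI ballI impI)
      show "min d1 d2 > 0" using d1 d2 by auto
      show "B1 + B2 + \<bar>x t\<bar> \<ge> 0" using d1 d2 by auto
      fix u assume "u \<in> {0..1}" "\<bar>u - t\<bar> < min d1 d2"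
      then consider "u = t" | "t < u \<and> u < t + d1 \<and> u \<le> 1" | "t - d2 < u \<and> u < t \<and> 0 \<le> u" using \<open>u \<in> {0..1}\<close> by (simp add: abs_less_iff) (smt (verit))
      then show "\<bar>x u\<bar> \<le> B1 + B2 + \<bar>x t\<bar>"
        by cases (use d1 d2 in force)+
    qed
  qed
  then obtain d B where dB: "\<forall>t\<in>{0..1}. d t > 0 \<and> B t \<ge> 0 \<and> (\<forall>u\<in>{0..1}. \<bar>u - t\<bar> < d t \<longrightarrow> \<bar>x u\<bar> \<le> B t)"
    by metis
  have "compact {0..1::real}" by simp
  then obtain K where K: "K \<subseteq> {0..1}" "finite K" "{0..1} \<subseteq> (\<Union>t\<in>K. ball t (d t))"
    by (rule compactE_image[where f = "\<lambda>t. ball t (d t)" and C = "{0..1}"]) (use dB in \<open>auto simp: dist_real_def\<close>)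
  show ?thesis
  proof (intro exI ballI)
    fix u :: real assume u: "u \<in> {0..1}"
    then obtain t where t: "t \<in> K" "u \<in> ball t (d t)" using K by blast
    then have "\<bar>x u\<bar> \<le> B t" using dB K u by (auto simp: dist_real_def abs_minus_commute)
    also have "B t \<le> sum B K"
      by (rule member_le_sum) (use t K dB in auto)
    finally show "\<bar>x u\<bar> \<le> sum B K" .
  qed
qed

lemma Dsp_bdd: "x \<in> Dsp \<Longrightarrow> bdd_above ((\<lambda>t. \<bar>x t\<bar>) ` {0..1})"
  using Dsp_bounded by (auto simp: bdd_above_def)

lemma supn_ge: "x \<in> Dsp \<Longrightarrow> t \<in> {0..1} \<Longrightarrow> \<bar>x t\<bar> \<le> supn x"
  unfolding supn_def by (rule cSUP_upper) (auto dest: Dsp_bdd)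

lemma supn_nonneg: "x \<in> Dsp \<Longrightarrow> 0 \<le> supn x"
  using supn_ge[of x 0] by force

lemma supn_le: "(\<And>t. t \<in> {0..1} \<Longrightarrow> \<bar>x t\<bar> \<le> M) \<Longrightarrow> supn x \<le> M"
  unfolding supn_def by (rule cSUP_least) auto


section \<open>Lambda\<close>

lemma lam_props:
  assumes "l \<in> Lambda_set"
  shows "continuous_on {0..1} l" "strict_mono_on {0..1} l" "l 0 = 0" "l 1 = 1"
  using assms by (auto simp: Lambda_set_def)

lemma lam_less: "l \<in> Lambda_set \<Longrightarrow> a \<in> {0..1} \<Longrightarrow> b \<in> {0..1} \<Longrightarrow> a < b \<Longrightarrow> l a < l b"
  using lam_props(2) strict_mono_onD by blast

lemma lam_le: "l \<in> Lambda_set \<Longrightarrow> a \<in> {0..1} \<Longrightarrow> b \<in> {0..1} \<Longrightarrow> a \<le> b \<Longrightarrow> l a \<le> l b"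
  using lam_less[of l a b] by (cases "a = b") auto

lemma lam_range: "l \<in> Lambda_set \<Longrightarrow> t \<in> {0..1} \<Longrightarrow> l t \<in> {0..1}"
  using lam_le[of l 0 t] lam_le[of l t 1] lam_props(3,4)[of l] by auto

lemma lam_pos: "l \<in> Lambda_set \<Longrightarrow> 0 < t \<Longrightarrow> t \<le> 1 \<Longrightarrow> 0 < l t"
  using lam_less[of l 0 t] lam_props(3)[of l] by auto

lemma lam_lt1: "l \<in> Lambda_set \<Longrightarrow> 0 \<le> t \<Longrightarrow> t < 1 \<Longrightarrow> l t < 1"
  using lam_less[of l t 1] lam_props(4)[of l] by auto

lemma lam_image:
  assumes l: "l \<in> Lambda_set" and t: "t \<in> {0..1}"
  shows "l ` {0..t} = {0..l t}"
proof
  show "l ` {0..t} \<subseteq> {0..l t}"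
    using lam_le[OF l] lam_range[OF l] t by auto
  show "{0..l t} \<subseteq> l ` {0..t}"
  proof
    fix y assume y: "y \<in> {0..l t}"
    have "continuous_on {0..t} l"
      using lam_props(1)[OF l] by (rule continuous_on_subset) (use t in auto)
    then obtain s where "0 \<le> s" "s \<le> t" "l s = y"
      using IVT'[of l 0 y t] y t lam_props(3)[OF l] by auto
    then show "y \<in> l ` {0..t}" by auto
  qed
qed

lemma lam_cont_right:
  assumes l: "l \<in> Lambda_set" and t: "0 \<le> t" "t < 1"
  shows "(l \<longlongrightarrow> l t) (at_right t)"
proof (rule tendstoI)
  fix e :: real assume e: "e > 0"
  obtain d where d: "d > 0" "\<forall>x'\<in>{0..1}. dist x' t < d \<longrightarrow> dist (l x') (l t) < e"
    using lam_props(1)[OF l] e t unfolding continuous_on_iff by (meson atLeastAtMost_iff less_le_not_le)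
  show "eventually (\<lambda>x. dist (l x) (l t) < e) (at_right t)"
    unfolding eventually_at_right_field
    by (rule exI[of _ "min (t + d) 1"]) (use d t in \<open>auto simp: dist_real_def\<close>)
qed

lemma lam_cont_left:
  assumes l: "l \<in> Lambda_set" and t: "0 < t" "t \<le> 1"
  shows "(l \<longlongrightarrow> l t) (at_left t)"
proof (rule tendstoI)
  fix e :: real assume e: "e > 0"
  obtain d where d: "d > 0" "\<forall>x'\<in>{0..1}. dist x' t < d \<longrightarrow> dist (l x') (l t) < e"
    using lam_props(1)[OF l] e t unfolding continuous_on_iff by (meson atLeastAtMost_iff less_le_not_le)
  show "eventually (\<lambda>x. dist (l x) (l t) < e) (at_left t)"
    unfolding eventually_at_left_field
    by (rule exI[of _ "max (t - d) 0"]) (use d t in \<open>auto simp: dist_real_def\<close>)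
qed

lemma lam_filterlim_right:
  assumes l: "l \<in> Lambda_set" and t: "0 \<le> t" "t < 1"
  shows "filterlim l (at_right (l t)) (at_right t)"
proof (rule tendsto_imp_filterlim_at_right[OF lam_cont_right[OF l t]])
  show "eventually (\<lambda>x. l x > l t) (at_right t)"
    unfolding eventually_at_right_field
    by (rule exI[of _ 1]) (use t lam_less[OF l] in auto)
qed

lemma lam_filterlim_left:
  assumes l: "l \<in> Lambda_set" and t: "0 < t" "t \<le> 1"
  shows "filterlim l (at_left (l t)) (at_left t)"
proof (rule tendsto_imp_filterlim_at_left[OF lam_cont_left[OF l t]])
  show "eventually (\<lambda>x. l x < l t) (at_left t)"
    unfolding eventually_at_left_field
    by (rule exI[of _ 0]) (use t lam_less[OF l] in auto)
qed

lemma Dsp_comp: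
  assumes x: "x \<in> Dsp" and l: "l \<in> Lambda_set"
  shows "x \<circ> l \<in> Dsp"
proof (rule DspI)
  fix t :: real assume t: "0 \<le> t" "t < 1"
  have "(x \<longlongrightarrow> x (l t)) (at_right (l t))"
    using Dsp_right[OF x] lam_range[OF l, of t] lam_lt1[OF l t] t by auto
  then show "((x \<circ> l) \<longlongrightarrow> (x \<circ> l) t) (at_right t)"
    unfolding o_def using filterlim_compose lam_filterlim_right[OF l t] by fastforce
next
  fix t :: real assume t: "0 < t" "t \<le> 1"
  have "(x \<longlongrightarrow> Lim (at_left (l t)) x) (at_left (l t))"
    using Dsp_left[OF x] lam_range[OF l, of t] lam_pos[OF l t] t by auto
  then show "\<exists>L. ((x \<circ> l) \<longlongrightarrow> L) (at_left t)"
    unfolding o_def using filterlim_compose lam_filterlim_left[OF l t] by fastforce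
qed


section \<open>Jumps\<close>

lemma jump_nonpos[simp]: "t \<le> 0 \<Longrightarrow> jump x t = 0"
  by (simp add: jump_def)

lemma jump_Lim_eq:
  assumes "(x \<longlongrightarrow> L) (at_left t)" "0 < t"
  shows "jump x t = x t - L"
  using tendsto_Lim[OF trivial_limit_at_left_real assms(1)] assms(2) by (simp add: jump_def)

lemma jump_lip:
  assumes x: "x \<in> Dsp" and y: "y \<in> Dsp" and s: "s \<in> {0..1}"
  shows "\<bar>jump x s - jump y s\<bar> \<le> 2 * supn (\<lambda>t. x t - y t)"
proof (cases "s \<le> 0")
  case True
  then show ?thesis using supn_nonneg[OF Dsp_diff[OF x y]] by simp
next
  case False
  let ?M = "supn (\<lambda>t. x t - y t)"
  have lx: "(x \<longlongrightarrow> Lim (at_left s) x) (at_left s)" and ly: "(y \<longlongrightarrow> Lim (at_left s) y) (at_left s)"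
    using Dsp_left x y s False by auto
  have ev: "eventually (\<lambda>u. norm (x u - y u) \<le> ?M) (at_left s)"
    unfolding eventually_at_left_field
    by (rule exI[of _ 0]) (use False s supn_ge[OF Dsp_diff[OF x y]] in auto)
  have "norm (Lim (at_left s) x - Lim (at_left s) y) \<le> ?M"
    by (rule Lim_norm_ubound[OF _ tendsto_diff[OF lx ly] ev]) simp
  moreover have "\<bar>x s - y s\<bar> \<le> ?M" using supn_ge[OF Dsp_diff[OF x y], of s] s by simp
  ultimately show ?thesis using False by (simp add: jump_def)
qed

lemma jump_zero: "jump (\<lambda>_. 0) s = 0"
proof (cases "s \<le> 0")
  case False
  then show ?thesis using jump_Lim_eq[of "\<lambda>_. 0" 0 s] by simp
qed simp

lemma jump_bound:
  assumes x: "x \<in> Dsp" and s: "s \<in> {0..1}"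
  shows "\<bar>jump x s\<bar> \<le> 2 * supn x"
  using jump_lip[OF x Dsp_const[of 0] s] by (simp add: jump_zero)

lemma jump_small_right:
  assumes x: "x \<in> Dsp" and t: "0 \<le> t" "t < 1" and e: "e > 0"
  shows "\<exists>d>0. \<forall>s. t < s \<and> s < t + d \<and> s \<le> 1 \<longrightarrow> \<bar>jump x s\<bar> \<le> 2 * e"
proof -
  have "eventually (\<lambda>u. dist (x u) (x t) < e) (at_right t)"
    using Dsp_right[OF x t] e by (simp add: tendsto_iff)
  then obtain b where b: "b > t" "\<forall>u>t. u < b \<longrightarrow> dist (x u) (x t) < e"
    by (auto simp: eventually_at_right_field)
  show ?thesis
  proof (intro exI conjI allI impI)
    show "b - t > 0" using b by simp
    fix s assume s: "t < s \<and> s < t + (b - t) \<and> s \<le> 1"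
    have ls: "(x \<longlongrightarrow> Lim (at_left s) x) (at_left s)" using Dsp_left[OF x] s t by auto
    have ev: "eventually (\<lambda>u. norm (x u - x t) \<le> e) (at_left s)"
      unfolding eventually_at_left_field
      by (rule exI[of _ t]) (use s b in \<open>auto simp: dist_real_def\<close>)
    have "norm (Lim (at_left s) x - x t) \<le> e"
      by (rule Lim_norm_ubound[OF _ tendsto_diff[OF ls tendsto_const] ev]) simp
    moreover have "\<bar>x s - x t\<bar> < e" using b s by (auto simp: dist_real_def)
    ultimately show "\<bar>jump x s\<bar> \<le> 2 * e" using s t by (simp add: jump_def)
  qed
qed

lemma jump_comp:
  assumes x: "x \<in> Dsp" and l: "l \<in> Lambda_set" and s: "s \<in> {0..1}"
  shows "jump (x \<circ> l) s = jump x (l s)"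
proof (cases "s \<le> 0")
  case True
  then have "s = 0" using s by auto
  then show ?thesis using lam_props(3)[OF l] by simp
next
  case False
  have L: "(x \<longlongrightarrow> Lim (at_left (l s)) x) (at_left (l s))"
    using Dsp_left[OF x] lam_range[OF l s] lam_pos[OF l, of s] False s by auto
  have "((x \<circ> l) \<longlongrightarrow> Lim (at_left (l s)) x) (at_left s)"
    unfolding o_def using filterlim_compose[OF L lam_filterlim_left[OF l]] False s by auto
  then show ?thesis
    using jump_Lim_eq[OF L] jump_Lim_eq[of "x \<circ> l"] lam_pos[OF l, of s] False s by auto
qed

lemma jump_local:
  assumes eq: "\<forall>t\<in>{0..1}. f t = g t" and s: "s \<in> {0..1}"
  shows "jump f s = jump g s"
proof (cases "s \<le> 0")
  case False
  have ev: "eventually (\<lambda>u. f u = g u) (at_left s)"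
    unfolding eventually_at_left_field
    by (rule exI[of _ 0]) (use False s eq in auto)
  have "Lim (at_left s) f = Lim (at_left s) g"
    using Lim_cong[OF ev refl] .
  then show ?thesis using eq s False by (simp add: jump_def)
qed simp

section \<open>Running suprema\<close>

definition rs :: "(real \<Rightarrow> real) \<Rightarrow> real \<Rightarrow> real" where
  "rs g t = (SUP s\<in>{0..t}. g s)"

lemma rs_ge:
  assumes B: "\<forall>s\<in>{0..1}. g s \<le> B" and "0 \<le> s" "s \<le> t" "t \<le> 1"
  shows "g s \<le> rs g t"
  unfolding rs_def
  by (rule cSUP_upper) (use assms in \<open>auto intro!: bdd_aboveI[of _ B]\<close>)

lemma rs_le:
  assumes "0 \<le> t" "\<forall>s\<in>{0..t}. g s \<le> M"
  shows "rs g t \<le> M"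
  unfolding rs_def by (rule cSUP_least) (use assms in auto)

lemma rs_mono:
  assumes B: "\<forall>s\<in>{0..1}. g s \<le> B" and "0 \<le> t" "t \<le> t'" "t' \<le> 1"
  shows "rs g t \<le> rs g t'"
  using assms rs_le[of t g "rs g t'"] rs_ge[OF B] by auto

lemma rs_lip:
  assumes Bg: "\<forall>s\<in>{0..1}. g s \<le> B" and Bh: "\<forall>s\<in>{0..1}. h s \<le> B'"
    and t: "t \<in> {0..1}" and M: "\<forall>s\<in>{0..t}. \<bar>g s - h s\<bar> \<le> M"
  shows "\<bar>rs g t - rs h t\<bar> \<le> M"
proof -
  have "rs g t \<le> rs h t + M"
  proof (rule rs_le)
    show "0 \<le> t" using t by simp
    show "\<forall>s\<in>{0..t}. g s \<le> rs h t + M"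
    proof
      fix s assume s: "s \<in> {0..t}"
      have "h s \<le> rs h t" using rs_ge[OF Bh, of s t] s t by simp
      moreover have "\<bar>g s - h s\<bar> \<le> M" using M s by blast
      ultimately show "g s \<le> rs h t + M" by linarith
    qed
  qed
  moreover have "rs h t \<le> rs g t + M"
  proof (rule rs_le)
    show "0 \<le> t" using t by simp
    show "\<forall>s\<in>{0..t}. h s \<le> rs g t + M"
    proof
      fix s assume s: "s \<in> {0..t}"
      have "g s \<le> rs g t" using rs_ge[OF Bg, of s t] s t by simp
      moreover have "\<bar>g s - h s\<bar> \<le> M" using M s by blast
      ultimately show "h s \<le> rs g t + M" by linarith
    qed
  qed
  ultimately show ?thesis by linarith
qed

lemma rs_comp:
  assumes l: "l \<in> Lambda_set" and t: "t \<in> {0..1}"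
  shows "rs g (l t) = rs (g \<circ> l) t"
  unfolding rs_def using lam_image[OF l t] by (metis image_comp)

lemma rs_local:
  assumes "\<forall>s\<in>{0..1}. g s = h s" "t \<in> {0..1}"
  shows "rs g t = rs h t"
  unfolding rs_def by (rule SUP_cong) (use assms in auto)

lemma rs_Dsp:
  assumes B: "\<forall>s\<in>{0..1}. g s \<le> B"
    and R: "\<forall>t. 0 \<le> t \<and> t < 1 \<longrightarrow> (\<forall>e>0. \<exists>d>0. \<forall>s. t < s \<and> s < t + d \<and> s \<le> 1 \<longrightarrow> g s \<le> rs g t + e)"
  shows "rs g \<in> Dsp"
proof (rule DspI)
  fix t :: real assume t: "0 \<le> t" "t < 1"
  show "(rs g \<longlongrightarrow> rs g t) (at_right t)"
  proof (rule tendstoI)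
    fix e :: real assume e: "e > 0"
    obtain d where d: "d > 0" "\<forall>s. t < s \<and> s < t + d \<and> s \<le> 1 \<longrightarrow> g s \<le> rs g t + e / 2"
      using R t e by (meson half_gt_zero)
    show "eventually (\<lambda>s. dist (rs g s) (rs g t) < e) (at_right t)"
      unfolding eventually_at_right_field
    proof (rule exI[of _ "min (t + d) 1"], intro conjI allI impI)
      show "t < min (t + d) 1" using d t by simp
      fix s assume s: "t < s" "s < min (t + d) 1"
      have "rs g t \<le> rs g s" by (rule rs_mono[OF B]) (use s t in auto)
      moreover have "rs g s \<le> rs g t + e / 2"
      proof (rule rs_le)
        show "0 \<le> s" using s t by simp
        show "\<forall>u\<in>{0..s}. g u \<le> rs g t + e / 2"
        proof
          fix u assume u: "u \<in> {0..s}"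
          show "g u \<le> rs g t + e / 2"
          proof (cases "u \<le> t")
            case True
            then show ?thesis using rs_ge[OF B, of u t] u t e by auto
          next
            case False
            then show ?thesis using d(2) u s by auto
          qed
        qed
      qed
      ultimately show "dist (rs g s) (rs g t) < e" using e by (simp add: dist_real_def)
    qed
  qed
next
  fix t :: real assume t: "0 < t" "t \<le> 1"
  let ?L = "SUP s\<in>{0..<t}. rs g s"
  have bdd: "bdd_above (rs g ` {0..<t})"
    by (rule bdd_aboveI[of _ B]) (use B t in \<open>auto intro!: rs_le\<close>)
  have "(rs g \<longlongrightarrow> ?L) (at_left t)"
  proof (rule tendstoI)
    fix e :: real assume e: "e > 0"
    have "?L - e < ?L" using e by simp
    then obtain s0 where s0: "s0 \<in> {0..<t}" "?L - e < rs g s0"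
      using less_cSUP_iff[of "{0..<t}" "rs g", OF _ bdd] t by auto
    show "eventually (\<lambda>s. dist (rs g s) ?L < e) (at_left t)"
      unfolding eventually_at_left_field
    proof (rule exI[of _ s0], intro conjI allI impI)
      show "s0 < t" using s0 by simp
      fix s assume s: "s0 < s" "s < t"
      have "rs g s0 \<le> rs g s" by (rule rs_mono[OF B]) (use s s0 t in auto)
      moreover have "rs g s \<le> ?L" by (rule cSUP_upper[OF _ bdd]) (use s s0 in auto)
      ultimately show "dist (rs g s) ?L < e" using s0 by (simp add: dist_real_def)
    qed
  qed
  then show "\<exists>L. (rs g \<longlongrightarrow> L) (at_left t)" by blast
qed


section \<open>Good operators\<close>

definition good :: "((real \<Rightarrow> real) \<Rightarrow> (real \<Rightarrow> real)) \<Rightarrow> real \<Rightarrow> bool" where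
  "good \<Psi> L \<longleftrightarrow> (\<forall>x\<in>Dsp. \<Psi> x \<in> Dsp) \<and> L \<ge> 0 \<and>
     (\<forall>x\<in>Dsp. \<forall>y\<in>Dsp. \<forall>t\<in>{0..1}. \<bar>\<Psi> x t - \<Psi> y t\<bar> \<le> L * supn (\<lambda>t. x t - y t)) \<and>
     (\<forall>f g. (\<forall>t\<in>{0..1}. f t = g t) \<longrightarrow> (\<forall>t\<in>{0..1}. \<Psi> f t = \<Psi> g t)) \<and>
     Lambda_compatible \<Psi>"

lemma goodI:
  assumes "\<And>x. x \<in> Dsp \<Longrightarrow> \<Psi> x \<in> Dsp" "L \<ge> 0"
    "\<And>x y t. x \<in> Dsp \<Longrightarrow> y \<in> Dsp \<Longrightarrow> t \<in> {0..1} \<Longrightarrow> \<bar>\<Psi> x t - \<Psi> y t\<bar> \<le> L * supn (\<lambda>t. x t - y t)"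
    "\<And>f g t. (\<forall>t\<in>{0..1}. f t = g t) \<Longrightarrow> t \<in> {0..1} \<Longrightarrow> \<Psi> f t = \<Psi> g t"
    "\<And>x l t. x \<in> Dsp \<Longrightarrow> l \<in> Lambda_set \<Longrightarrow> t \<in> {0..1} \<Longrightarrow> \<Psi> x (l t) = \<Psi> (x \<circ> l) t"
  shows "good \<Psi> L"
  using assms unfolding good_def Lambda_compatible_def by blast

lemma goodD:
  assumes "good \<Psi> L"
  shows "\<And>x. x \<in> Dsp \<Longrightarrow> \<Psi> x \<in> Dsp" "L \<ge> 0"
    "\<And>x y t. x \<in> Dsp \<Longrightarrow> y \<in> Dsp \<Longrightarrow> t \<in> {0..1} \<Longrightarrow> \<bar>\<Psi> x t - \<Psi> y t\<bar> \<le> L * supn (\<lambda>t. x t - y t)"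
    "\<And>f g t. (\<forall>t\<in>{0..1}. f t = g t) \<Longrightarrow> t \<in> {0..1} \<Longrightarrow> \<Psi> f t = \<Psi> g t"
    "\<And>x l t. x \<in> Dsp \<Longrightarrow> l \<in> Lambda_set \<Longrightarrow> t \<in> {0..1} \<Longrightarrow> \<Psi> x (l t) = \<Psi> (x \<circ> l) t"
  using assms unfolding good_def Lambda_compatible_def by blast+

lemma supn_diff_ge: "x \<in> Dsp \<Longrightarrow> y \<in> Dsp \<Longrightarrow> t \<in> {0..1} \<Longrightarrow> \<bar>x t - y t\<bar> \<le> supn (\<lambda>t. x t - y t)"
  using supn_ge[OF Dsp_diff] by blast

lemma good_id: "good (\<lambda>x. x) 1"
  by (rule goodI) (auto simp: supn_diff_ge)

lemma good_comp:
  assumes P: "good \<Psi> L1" and F: "good \<Phi> L2"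
  shows "good (\<lambda>x. \<Psi> (\<Phi> x)) (L1 * L2)"
proof (rule goodI)
  show "\<And>x. x \<in> Dsp \<Longrightarrow> \<Psi> (\<Phi> x) \<in> Dsp" using goodD(1)[OF P] goodD(1)[OF F] by blast
  show "0 \<le> L1 * L2" using goodD(2)[OF P] goodD(2)[OF F] by simp
next
  fix x y :: "real \<Rightarrow> real" and t :: real assume x: "x \<in> Dsp" and y: "y \<in> Dsp" and t: "t \<in> {0..1}"
  have "supn (\<lambda>t. \<Phi> x t - \<Phi> y t) \<le> L2 * supn (\<lambda>t. x t - y t)"
    by (rule supn_le) (use goodD(3)[OF F x y] in auto)
  then have "L1 * supn (\<lambda>t. \<Phi> x t - \<Phi> y t) \<le> L1 * (L2 * supn (\<lambda>t. x t - y t))"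
    using goodD(2)[OF P] by (rule mult_left_mono)
  then show "\<bar>\<Psi> (\<Phi> x) t - \<Psi> (\<Phi> y) t\<bar> \<le> L1 * L2 * supn (\<lambda>t. x t - y t)"
    using goodD(3)[OF P goodD(1)[OF F x] goodD(1)[OF F y] t] by (simp add: mult.assoc)
next
  fix f g :: "real \<Rightarrow> real" and t :: real assume "\<forall>t\<in>{0..1}. f t = g t" "t \<in> {0..1}"
  then show "\<Psi> (\<Phi> f) t = \<Psi> (\<Phi> g) t" using goodD(4)[OF P] goodD(4)[OF F] by blast
next
  fix x l :: "real \<Rightarrow> real" and t :: real assume x: "x \<in> Dsp" and l: "l \<in> Lambda_set" and t: "t \<in> {0..1}"
  have "\<Psi> (\<Phi> x) (l t) = \<Psi> (\<Phi> x \<circ> l) t" using goodD(5)[OF P goodD(1)[OF F x] l t] .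
  also have "\<dots> = \<Psi> (\<Phi> (x \<circ> l)) t"
    by (rule goodD(4)[OF P]) (use goodD(5)[OF F x l] t in auto)
  finally show "\<Psi> (\<Phi> x) (l t) = \<Psi> (\<Phi> (x \<circ> l)) t" .
qed

lemma good_pow: "good f L \<Longrightarrow> good (f ^^ n) (L ^ n)"
proof (induction n)
  case 0
  then show ?case using good_id by (simp add: id_def)
next
  case (Suc n)
  then show ?case using good_comp[OF Suc.prems Suc.IH] by (simp add: o_def)
qed

lemma good_minus:
  assumes P: "good \<Psi> L"
  shows "good (\<lambda>x t. x t - \<Psi> x t) (1 + L)"
proof (rule goodI)
  show "\<And>x. x \<in> Dsp \<Longrightarrow> (\<lambda>t. x t - \<Psi> x t) \<in> Dsp" using goodD(1)[OF P] Dsp_diff by blast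
  show "0 \<le> 1 + L" using goodD(2)[OF P] by simp
next
  fix x y :: "real \<Rightarrow> real" and t :: real assume x: "x \<in> Dsp" and y: "y \<in> Dsp" and t: "t \<in> {0..1}"
  show "\<bar>(x t - \<Psi> x t) - (y t - \<Psi> y t)\<bar> \<le> (1 + L) * supn (\<lambda>t. x t - y t)"
    using goodD(3)[OF P x y t] supn_diff_ge[OF x y t] by (simp add: algebra_simps)
qed (use goodD(4,5)[OF P] in auto)

lemma good_plus:
  assumes P: "good \<Psi> L"
  shows "good (\<lambda>x t. x t + \<Psi> x t) (1 + L)"
proof (rule goodI)
  show "\<And>x. x \<in> Dsp \<Longrightarrow> (\<lambda>t. x t + \<Psi> x t) \<in> Dsp" using goodD(1)[OF P] Dsp_add by blast
  show "0 \<le> 1 + L" using goodD(2)[OF P] by simp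
next
  fix x y :: "real \<Rightarrow> real" and t :: real assume x: "x \<in> Dsp" and y: "y \<in> Dsp" and t: "t \<in> {0..1}"
  show "\<bar>(x t + \<Psi> x t) - (y t + \<Psi> y t)\<bar> \<le> (1 + L) * supn (\<lambda>t. x t - y t)"
    using goodD(3)[OF P x y t] supn_diff_ge[OF x y t] by (simp add: algebra_simps)
qed (use goodD(4,5)[OF P] in auto)

lemma good_neg: "good (\<lambda>x t. - x t) 1"
proof (rule goodI)
  fix x y :: "real \<Rightarrow> real" and t :: real assume x: "x \<in> Dsp" and y: "y \<in> Dsp" and t: "t \<in> {0..1}"
  show "\<bar>- x t - - y t\<bar> \<le> 1 * supn (\<lambda>t. x t - y t)"
    using supn_diff_ge[OF x y t] by simp
qed (auto simp: Dsp_neg)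


lemma good_rsI:
  assumes bnd: "\<And>x. x \<in> Dsp \<Longrightarrow> \<exists>B. \<forall>s\<in>{0..1}. G x s \<le> B"
    and right: "\<And>x t e. x \<in> Dsp \<Longrightarrow> 0 \<le> t \<Longrightarrow> t < 1 \<Longrightarrow> e > 0 \<Longrightarrow>
        \<exists>d>0. \<forall>s. t < s \<and> s < t + d \<and> s \<le> 1 \<longrightarrow> G x s \<le> rs (G x) t + e"
    and lip: "\<And>x y s. x \<in> Dsp \<Longrightarrow> y \<in> Dsp \<Longrightarrow> s \<in> {0..1} \<Longrightarrow> \<bar>G x s - G y s\<bar> \<le> L * supn (\<lambda>t. x t - y t)"
    and L: "L \<ge> 0"
    and loc: "\<And>f g s. (\<forall>t\<in>{0..1}. f t = g t) \<Longrightarrow> s \<in> {0..1} \<Longrightarrow> G f s = G g s"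
    and comp: "\<And>x l s. x \<in> Dsp \<Longrightarrow> l \<in> Lambda_set \<Longrightarrow> s \<in> {0..1} \<Longrightarrow> G x (l s) = G (x \<circ> l) s"
  shows "good (\<lambda>x. rs (G x)) L"
proof (rule goodI)
  fix x assume x: "x \<in> Dsp"
  obtain B where B: "\<forall>s\<in>{0..1}. G x s \<le> B" using bnd[OF x] by blast
  show "rs (G x) \<in> Dsp"
    by (rule rs_Dsp[OF B]) (use right[OF x] in blast)
next
  fix x y :: "real \<Rightarrow> real" and t :: real assume x: "x \<in> Dsp" and y: "y \<in> Dsp" and t: "t \<in> {0..1}"
  obtain B where B: "\<forall>s\<in>{0..1}. G x s \<le> B" using bnd[OF x] by blast
  obtain B' where B': "\<forall>s\<in>{0..1}. G y s \<le> B'" using bnd[OF y] by blast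
  show "\<bar>rs (G x) t - rs (G y) t\<bar> \<le> L * supn (\<lambda>t. x t - y t)"
    by (rule rs_lip[OF B B' t]) (use lip[OF x y] t in auto)
next
  fix f g :: "real \<Rightarrow> real" and t :: real assume "\<forall>t\<in>{0..1}. f t = g t" "t \<in> {0..1}"
  then show "rs (G f) t = rs (G g) t" by (intro rs_local) (auto intro: loc)
next
  fix x l :: "real \<Rightarrow> real" and t :: real assume x: "x \<in> Dsp" and l: "l \<in> Lambda_set" and t: "t \<in> {0..1}"
  have "rs (G x) (l t) = rs (G x \<circ> l) t" by (rule rs_comp[OF l t])
  also have "\<dots> = rs (G (x \<circ> l)) t"
    by (rule rs_local) (use comp[OF x l] t in auto)
  finally show "rs (G x) (l t) = rs (G (x \<circ> l)) t" .
qed (use L in auto)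

lemma Dsp_right_eps:
  assumes x: "x \<in> Dsp" and t: "0 \<le> t" "t < 1" and e: "e > 0"
  shows "\<exists>d>0. \<forall>s. t < s \<and> s < t + d \<longrightarrow> \<bar>x s - x t\<bar> < e"
proof -
  have "eventually (\<lambda>u. dist (x u) (x t) < e) (at_right t)"
    using Dsp_right[OF x t] e by (simp add: tendsto_iff)
  then obtain b where b: "b > t" "\<forall>u>t. u < b \<longrightarrow> dist (x u) (x t) < e"
    by (auto simp: eventually_at_right_field)
  show ?thesis by (rule exI[of _ "b - t"]) (use b in \<open>auto simp: dist_real_def\<close>)
qed

lemma good_Ssup: "good Ssup 1"
proof -
  have "good (\<lambda>x. rs ((\<lambda>x. x) x)) 1"
  proof (rule good_rsI)
    fix x assume x: "x \<in> Dsp"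
    show "\<exists>B. \<forall>s\<in>{0..1}. x s \<le> B" using supn_ge[OF x] by (meson abs_ge_self order_trans)
    fix t e :: real assume t: "0 \<le> t" "t < 1" and e: "e > 0"
    obtain B where B: "\<forall>s\<in>{0..1}. x s \<le> B" using supn_ge[OF x] by (meson abs_ge_self order_trans)
    obtain d where d: "d > 0" "\<forall>s. t < s \<and> s < t + d \<longrightarrow> \<bar>x s - x t\<bar> < e"
      using Dsp_right_eps[OF x t e] by blast
    show "\<exists>d>0. \<forall>s. t < s \<and> s < t + d \<and> s \<le> 1 \<longrightarrow> x s \<le> rs x t + e"
      by (rule exI[of _ d]) (use d rs_ge[OF B, of t t] t in force)
  qed (auto simp: supn_diff_ge)
  moreover have "Ssup = rs" by (simp add: Ssup_def rs_def fun_eq_iff)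
  ultimately show ?thesis by simp
qed

lemma good_Sabs: "good Sabs 1"
proof -
  have "good (\<lambda>x. rs (\<lambda>s. \<bar>x s\<bar>)) 1"
  proof (rule good_rsI)
    fix x assume x: "x \<in> Dsp"
    show "\<exists>B. \<forall>s\<in>{0..1}. \<bar>x s\<bar> \<le> B" using supn_ge[OF x] by blast
    fix t e :: real assume t: "0 \<le> t" "t < 1" and e: "e > 0"
    have B: "\<forall>s\<in>{0..1}. \<bar>x s\<bar> \<le> supn x" using supn_ge[OF x] by blast
    obtain d where d: "d > 0" "\<forall>s. t < s \<and> s < t + d \<longrightarrow> \<bar>x s - x t\<bar> < e"
      using Dsp_right_eps[OF x t e] by blast
    show "\<exists>d>0. \<forall>s. t < s \<and> s < t + d \<and> s \<le> 1 \<longrightarrow> \<bar>x s\<bar> \<le> rs (\<lambda>s. \<bar>x s\<bar>) t + e"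
      by (rule exI[of _ d]) (use d rs_ge[OF B, of t t] t in force)
  next
    fix x y :: "real \<Rightarrow> real" and s :: real assume x: "x \<in> Dsp" and y: "y \<in> Dsp" and s: "s \<in> {0..1}"
    show "\<bar>\<bar>x s\<bar> - \<bar>y s\<bar>\<bar> \<le> 1 * supn (\<lambda>t. x t - y t)"
      using supn_diff_ge[OF x y s] by linarith
  qed auto
  moreover have "Sabs = (\<lambda>x. rs (\<lambda>s. \<bar>x s\<bar>))" by (simp add: Sabs_def rs_def fun_eq_iff)
  ultimately show ?thesis by simp
qed

lemma jump_B: "x \<in> Dsp \<Longrightarrow> \<forall>s\<in>{0..1}. jump x s \<le> 2 * supn x"
  using jump_bound by (meson abs_ge_self order_trans)

lemma good_Sdelta: "good Sdelta 2"
proof -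
  have "good (\<lambda>x. rs (jump x)) 2"
  proof (rule good_rsI)
    fix x assume x: "x \<in> Dsp"
    show "\<exists>B. \<forall>s\<in>{0..1}. jump x s \<le> B" using jump_B[OF x] by blast
    fix t e :: real assume t: "0 \<le> t" "t < 1" and e: "e > 0"
    obtain d where d: "d > 0" "\<forall>s. t < s \<and> s < t + d \<and> s \<le> 1 \<longrightarrow> \<bar>jump x s\<bar> \<le> 2 * (e / 2)"
      using jump_small_right[OF x t, of "e / 2"] e by auto
    have "jump x 0 \<le> rs (jump x) t" by (rule rs_ge[OF jump_B[OF x]]) (use t in auto)
    then have "0 \<le> rs (jump x) t" by simp
    then show "\<exists>d>0. \<forall>s. t < s \<and> s < t + d \<and> s \<le> 1 \<longrightarrow> jump x s \<le> rs (jump x) t + e"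
      using d by (intro exI[of _ d]) force
  qed (auto simp: jump_lip jump_local jump_comp)
  moreover have "Sdelta = (\<lambda>x. rs (jump x))" by (simp add: Sdelta_def rs_def fun_eq_iff)
  ultimately show ?thesis by simp
qed

lemma good_Sdelta_abs: "good Sdelta_abs 2"
proof -
  have "good (\<lambda>x. rs (\<lambda>s. \<bar>jump x s\<bar>)) 2"
  proof (rule good_rsI)
    fix x assume x: "x \<in> Dsp"
    show "\<exists>B. \<forall>s\<in>{0..1}. \<bar>jump x s\<bar> \<le> B" using jump_bound[OF x] by blast
    fix t e :: real assume t: "0 \<le> t" "t < 1" and e: "e > 0"
    obtain d where d: "d > 0" "\<forall>s. t < s \<and> s < t + d \<and> s \<le> 1 \<longrightarrow> \<bar>jump x s\<bar> \<le> 2 * (e / 2)"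
      using jump_small_right[OF x t, of "e / 2"] e by auto
    have "\<bar>jump x 0\<bar> \<le> rs (\<lambda>s. \<bar>jump x s\<bar>) t"
      by (rule rs_ge[of _ "2 * supn x"]) (use t jump_bound[OF x] in auto)
    then have "0 \<le> rs (\<lambda>s. \<bar>jump x s\<bar>) t" by simp
    then show "\<exists>d>0. \<forall>s. t < s \<and> s < t + d \<and> s \<le> 1 \<longrightarrow> \<bar>jump x s\<bar> \<le> rs (\<lambda>s. \<bar>jump x s\<bar>) t + e"
      using d by (intro exI[of _ d]) force
  next
    fix x y :: "real \<Rightarrow> real" and s :: real assume x: "x \<in> Dsp" and y: "y \<in> Dsp" and s: "s \<in> {0..1}"
    show "\<bar>\<bar>jump x s\<bar> - \<bar>jump y s\<bar>\<bar> \<le> 2 * supn (\<lambda>t. x t - y t)"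
      using jump_lip[OF x y s] by linarith
  next
    fix f g :: "real \<Rightarrow> real" and s :: real assume "\<forall>t\<in>{0..1}. f t = g t" "s \<in> {0..1}"
    then show "\<bar>jump f s\<bar> = \<bar>jump g s\<bar>" using jump_local by metis
  qed (auto simp: jump_comp)
  moreover have "Sdelta_abs = (\<lambda>x. rs (\<lambda>s. \<bar>jump x s\<bar>))" by (simp add: Sdelta_abs_def rs_def fun_eq_iff)
  ultimately show ?thesis by simp
qed


lemma good_pm: "\<exists>L. good (Sdelta_pm pos) L"
proof (cases pos)
  case True
  have "Sdelta_pm pos = Sdelta" using True by (simp add: Sdelta_pm_def fun_eq_iff)
  then show ?thesis using good_Sdelta by auto
next
  case False
  have "Sdelta_pm pos = (\<lambda>x. Sdelta ((\<lambda>x t. - x t) x))" using False by (simp add: Sdelta_pm_def fun_eq_iff)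
  then show ?thesis using good_comp[OF good_Sdelta good_neg] by auto
qed

lemma good_Trim1: "\<exists>L. good (Trim1 pos) L"
proof (cases pos)
  case True
  have "Trim1 pos = (\<lambda>x t. x t - Sdelta x t)" using True by (simp add: Trim1_def Sdelta_pm_def fun_eq_iff)
  then show ?thesis using good_minus[OF good_Sdelta] by auto
next
  case False
  obtain L where L: "good (Sdelta_pm False) L" using good_pm by blast
  have "Trim1 pos = (\<lambda>x t. x t + Sdelta_pm False x t)" using False by (simp add: Trim1_def fun_eq_iff)
  then show ?thesis using good_plus[OF L] by auto
qed

lemma good_Trim: "\<exists>L. good (Trim r pos) L"
  using good_Trim1[of pos] good_pow unfolding Trim_def by blast

lemma good_Sdelta_r: "\<exists>L. good (Sdelta_r r pos) L"
proof -
  obtain L1 L2 where "good (Sdelta_pm pos) L1" "good (Trim (r - 1) pos) L2"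
    using good_pm good_Trim by blast
  note good_comp[OF this]
  moreover have "Sdelta_r r pos = (\<lambda>x. Sdelta_pm pos (Trim (r - 1) pos x))" by (simp add: fun_eq_iff Sdelta_r_def)
  ultimately show ?thesis by auto
qed

lemma good_Trim_rs: "\<exists>L. good (Trim_rs r s) L"
proof -
  obtain L1 L2 where "good (Trim r True) L1" "good (Trim s False) L2"
    using good_Trim by blast
  note good_comp[OF this]
  moreover have "Trim_rs r s = (\<lambda>x. Trim r True (Trim s False x))" by (simp add: fun_eq_iff Trim_rs_def)
  ultimately show ?thesis by auto
qed

lemma good_Trim_tilde1: "\<exists>L. good Trim_tilde1 L"
proof -
  have "Trim_tilde1 = (\<lambda>x t. x t - Sdelta_abs x t)" by (simp add: Trim_tilde1_def fun_eq_iff)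
  then show ?thesis using good_minus[OF good_Sdelta_abs] by auto
qed

lemma good_Trim_tilde: "\<exists>L. good (Trim_tilde r) L"
  using good_Trim_tilde1 good_pow unfolding Trim_tilde_def by blast

lemma good_Sdelta_tilde_r: "\<exists>L. good (Sdelta_tilde_r r) L"
proof -
  obtain L2 where "good (Trim_tilde (r - 1)) L2"
    using good_Trim_tilde by blast
  note good_comp[OF good_Sdelta_abs this]
  moreover have "Sdelta_tilde_r r = (\<lambda>x. Sdelta_abs (Trim_tilde (r - 1) x))" by (simp add: fun_eq_iff Sdelta_tilde_r_def)
  ultimately show ?thesis by auto
qed

lemma good_main:
  assumes G: "good \<Psi> L"
  shows "(\<forall>x\<in>Dsp. \<Psi> x \<in> Dsp) \<and> norm_Lipschitz \<Psi> \<and> Lambda_compatible \<Psi> \<and>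
         (\<forall>x\<in>Dsp. jointly_J1_continuous_at \<Psi> x)"
proof (intro conjI ballI)
  show "\<And>x. x \<in> Dsp \<Longrightarrow> \<Psi> x \<in> Dsp" using goodD(1)[OF G] .
  show "Lambda_compatible \<Psi>" using G by (simp add: good_def)
  show "norm_Lipschitz \<Psi>"
    unfolding norm_Lipschitz_def
    by (rule exI[of _ L], intro ballI supn_le) (use goodD(3)[OF G] in auto)
next
  fix x assume x: "x \<in> Dsp"
  show "jointly_J1_continuous_at \<Psi> x"
    unfolding jointly_J1_continuous_at_def
  proof (intro allI impI)
    fix xn assume H: "(\<forall>n. xn n \<in> Dsp) \<and> J1_conv xn x"
    then obtain ln where ln: "\<forall>n. ln n \<in> Lambda_set"
        "(\<lambda>n. supn (\<lambda>t. ln n t - t)) \<longlonglongrightarrow> 0"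
        "(\<lambda>n. supn (\<lambda>t. xn n (ln n t) - x t)) \<longlonglongrightarrow> 0"
      unfolding J1_conv_def by blast
    have xn: "\<And>n. xn n \<in> Dsp" using H by blast
    have c: "\<And>n. xn n \<circ> ln n \<in> Dsp" using Dsp_comp xn ln(1) by blast
    have eq: "\<And>n. supn (\<lambda>t. \<Psi> (xn n) (ln n t) - \<Psi> x t) = supn (\<lambda>t. \<Psi> (xn n \<circ> ln n) t - \<Psi> x t)"
      unfolding supn_def by (rule SUP_cong) (use goodD(5)[OF G xn ln(1)[rule_format]] in auto)
    have up: "\<And>n. supn (\<lambda>t. \<Psi> (xn n) (ln n t) - \<Psi> x t) \<le> L * supn (\<lambda>t. xn n (ln n t) - x t)"
      unfolding eq by (rule supn_le) (use goodD(3)[OF G c x] in auto)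
    have lo: "\<And>n. 0 \<le> supn (\<lambda>t. \<Psi> (xn n) (ln n t) - \<Psi> x t)"
      unfolding eq by (rule supn_nonneg[OF Dsp_diff]) (use goodD(1)[OF G] c x in auto)
    have lim: "(\<lambda>n. L * supn (\<lambda>t. xn n (ln n t) - x t)) \<longlonglongrightarrow> 0"
      using tendsto_mult_right_zero[OF ln(3)] by simp
    have "(\<lambda>n. supn (\<lambda>t. \<Psi> (xn n) (ln n t) - \<Psi> x t)) \<longlonglongrightarrow> 0"
      by (rule real_tendsto_sandwich[OF _ _ tendsto_const lim]) (use lo up in \<open>auto intro: always_eventually\<close>)
    then show "\<exists>ln. (\<forall>n. ln n \<in> Lambda_set) \<and>
           (\<lambda>n. supn (\<lambda>t. ln n t - t)) \<longlonglongrightarrow> 0 \<and>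
           (\<lambda>n. supn (\<lambda>t. xn n (ln n t) - x t)) \<longlonglongrightarrow> 0 \<and>
           (\<lambda>n. supn (\<lambda>t. \<Psi> (xn n) (ln n t) - \<Psi> x t)) \<longlonglongrightarrow> 0"
      using ln by blast
  qed
qed

theorem proposition2p2:
  fixes r s :: nat and \<Psi> :: "(real \<Rightarrow> real) \<Rightarrow> (real \<Rightarrow> real)"
  assumes "r \<ge> 1" and "s \<ge> 1" and "\<Psi> \<in> operators r s"
  shows "(\<forall>x\<in>Dsp. \<Psi> x \<in> Dsp) \<and> norm_Lipschitz \<Psi> \<and> Lambda_compatible \<Psi> \<and>
         (\<forall>x\<in>Dsp. jointly_J1_continuous_at \<Psi> x)"
proof -
  have "\<Psi> = Ssup \<or> \<Psi> = Sabs \<or> \<Psi> = Sdelta_pm True \<or> \<Psi> = Sdelta_pm False \<or> \<Psi> = Sdelta_abs \<or>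
     \<Psi> = Trim r True \<or> \<Psi> = Trim r False \<or> \<Psi> = Sdelta_r r True \<or> \<Psi> = Sdelta_r r False \<or>
     \<Psi> = Trim_rs r s \<or> \<Psi> = Trim_tilde r \<or> \<Psi> = Sdelta_tilde_r r"
    using assms(3) unfolding operators_def by simp
  then have "\<exists>L. good \<Psi> L"
    by (elim disjE) (use good_Ssup good_Sabs good_pm good_Sdelta_abs good_Trim good_Sdelta_r good_Trim_rs
      good_Trim_tilde good_Sdelta_tilde_r in blast)+
  then show ?thesis using good_main by blast
qed

end
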